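(* Let $n\ge 2$ and let $X_{a_1\cdots a_n}=X_{(a_1\cdots a_n)}$ be an affine tensor field on Minkowski spacetime $(\mathbb R^4,\eta)$, written in standard rectangular coordinates. Then $$\partial_r\partial_sX_{a_1\cdots a_n}=\frac{n(n-1)}{2}\partial_{(a_1}\partial_{a_2}X_{a_3\cdots a_n)rs},$$ with symmetrization over $a_1,\dots,a_n$ only.
   Context: Parentheses around indices denote symmetrization with weight one. A totally symmetric tensor field $X_{a_1\cdots a_n}$ on a pseudo-Riemannian manifold with Levi-Civita connection $\nabla$ is an affine tensor if $\nabla_b\nabla_{(c}X_{a_1\cdots a_n)}=0$; in rectangular coordinates on Minkowski spacetime $\nabla=\partial$. *)

theory Defs
  imports "HOL-Analysis.Analysis"
begin

text \<open>Points of Minkowski spacetime in standard rectangular coordinates: real^4.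
  Coordinate indices: elements of the numeral type 4. A rank-n tensor field is
  X :: 4 list => real^4 => real, with X as x the component X_{as} at x for length as = n.\<close>

definition pd :: "4 \<Rightarrow> (real^4 \<Rightarrow> real) \<Rightarrow> real^4 \<Rightarrow> real" where
  "pd i f x = deriv (\<lambda>t. f (x + t *\<^sub>R axis i 1)) 0"

definition partials :: "4 list \<Rightarrow> (real^4 \<Rightarrow> real) \<Rightarrow> real^4 \<Rightarrow> real" where
  "partials is f = foldr pd is f"

definition smooth_fun :: "(real^4 \<Rightarrow> real) \<Rightarrow> bool" where
  "smooth_fun f \<longleftrightarrow> (\<forall>is x. partials is f differentiable (at x))"

definition symz :: "(4 list \<Rightarrow> real) \<Rightarrow> 4 list \<Rightarrow> real" where
  "symz T l = (1 / fact (length l)) *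
     (\<Sum>p\<in>{p. p permutes {..<length l}}. T (map (\<lambda>i. l ! p i) [0..<length l]))"

definition symmetric_tensor :: "nat \<Rightarrow> (4 list \<Rightarrow> real^4 \<Rightarrow> real) \<Rightarrow> bool" where
  "symmetric_tensor n X \<longleftrightarrow>
     (\<forall>as bs. length as = n \<longrightarrow> mset as = mset bs \<longrightarrow> X as = X bs)"

text \<open>Affine tensor: \<nabla>_b \<nabla>_(c X_{a1...an)} = 0 with \<nabla> = \<partial> in rectangular coordinates.\<close>
definition affine_tensor :: "nat \<Rightarrow> (4 list \<Rightarrow> real^4 \<Rightarrow> real) \<Rightarrow> bool" where
  "affine_tensor n X \<longleftrightarrow> symmetric_tensor n X \<and>
     (\<forall>b c as x. length as = n \<longrightarrow>
        symz (\<lambda>l. pd b (pd (hd l) (X (tl l))) x) (c # as) = 0)"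

end

theory Submission
  imports Defs "HOL-Combinatorics.Permutations"
begin

lemma pd_has_deriv:
  fixes f :: "real^4 \<Rightarrow> real"
  assumes "f differentiable (at (y + t0 *\<^sub>R axis i 1))"
  shows "((\<lambda>t. f (y + t *\<^sub>R axis i 1)) has_real_derivative pd i f (y + t0 *\<^sub>R axis i 1)) (at t0)"
proof -
  let ?v = "axis i 1 :: real^4"
  let ?z = "y + t0 *\<^sub>R ?v"
  obtain f' where F: "(f has_derivative f') (at ?z)" using assms by (auto simp: differentiable_def)
  have lin: "linear f'" using F has_derivative_linear by blast
  have G: "((\<lambda>t. f (y0 + t *\<^sub>R ?v)) has_real_derivative f' ?v) (at t1)"
    if e: "y0 + t1 *\<^sub>R ?v = ?z" for y0 t1
  proof -
    have L: "((\<lambda>t. y0 + t *\<^sub>R ?v) has_derivative (\<lambda>t. t *\<^sub>R ?v)) (at t1)"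
      by (auto intro!: derivative_eq_intros)
    have "((f \<circ> (\<lambda>t. y0 + t *\<^sub>R ?v)) has_derivative (f' \<circ> (\<lambda>t. t *\<^sub>R ?v))) (at t1)"
      using diff_chain_at[OF L] F e by simp
    moreover have "(f' \<circ> (\<lambda>t. t *\<^sub>R ?v)) = (\<lambda>t. f' ?v * t)"
      using linear_cmul[OF lin] by (auto simp: o_def mult.commute)
    ultimately show ?thesis by (simp add: has_field_derivative_def o_def)
  qed
  have "pd i f ?z = f' ?v" unfolding pd_def using G[of ?z 0] DERIV_imp_deriv by simp
  then show ?thesis using G[of y t0] by simp
qed

lemma pd_has_deriv':
  fixes f :: "real^4 \<Rightarrow> real"
  assumes "\<And>z. f differentiable (at z)"
  shows "((\<lambda>t. f (y + t *\<^sub>R axis i 1)) has_real_derivative pd i f (y + t *\<^sub>R axis i 1)) (at t)"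
  using pd_has_deriv assms by blast

lemma schwarz_aux:
  fixes f :: "real^4 \<Rightarrow> real"
  assumes df: "\<And>z. f differentiable (at z)"
    and dk: "\<And>z. pd i f differentiable (at z)"
    and h: "h > 0"
  shows "\<exists>\<xi> \<eta>. 0 < \<xi> \<and> \<xi> < h \<and> 0 < \<eta> \<and> \<eta> < h \<and>
     f (x + h *\<^sub>R axis j 1 + h *\<^sub>R axis i 1) - f (x + h *\<^sub>R axis i 1) - f (x + h *\<^sub>R axis j 1) + f x
      = h * h * pd j (pd i f) (x + \<xi> *\<^sub>R axis i 1 + \<eta> *\<^sub>R axis j 1)"
proof -
  let ?e = "axis i 1 :: real^4" and ?d = "axis j 1 :: real^4"
  have "\<exists>\<xi>. 0 < \<xi> \<and> \<xi> < h \<and>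
     (\<lambda>u. f ((x + h *\<^sub>R ?d) + u *\<^sub>R ?e) - f (x + u *\<^sub>R ?e)) h - (\<lambda>u. f ((x + h *\<^sub>R ?d) + u *\<^sub>R ?e) - f (x + u *\<^sub>R ?e)) 0
      = (h - 0) * (pd i f ((x + h *\<^sub>R ?d) + \<xi> *\<^sub>R ?e) - pd i f (x + \<xi> *\<^sub>R ?e))"
    by (rule MVT2[OF h]) (intro DERIV_diff pd_has_deriv' df)
  then obtain \<xi> where \<xi>: "0 < \<xi>" "\<xi> < h"
    and e1: "f (x + h *\<^sub>R ?d + h *\<^sub>R ?e) - f (x + h *\<^sub>R ?e) - (f (x + h *\<^sub>R ?d) - f x)
      = h * (pd i f (x + h *\<^sub>R ?d + \<xi> *\<^sub>R ?e) - pd i f (x + \<xi> *\<^sub>R ?e))" by auto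
  have "\<exists>\<eta>. 0 < \<eta> \<and> \<eta> < h \<and>
     pd i f ((x + \<xi> *\<^sub>R ?e) + h *\<^sub>R ?d) - pd i f ((x + \<xi> *\<^sub>R ?e) + 0 *\<^sub>R ?d)
      = (h - 0) * pd j (pd i f) ((x + \<xi> *\<^sub>R ?e) + \<eta> *\<^sub>R ?d)"
    by (rule MVT2[OF h]) (intro pd_has_deriv' dk)
  then obtain \<eta> where \<eta>: "0 < \<eta>" "\<eta> < h"
    and e2: "pd i f (x + \<xi> *\<^sub>R ?e + h *\<^sub>R ?d) - pd i f (x + \<xi> *\<^sub>R ?e)
      = h * pd j (pd i f) (x + \<xi> *\<^sub>R ?e + \<eta> *\<^sub>R ?d)" by auto
  have "x + h *\<^sub>R ?d + \<xi> *\<^sub>R ?e = x + \<xi> *\<^sub>R ?e + h *\<^sub>R ?d" by (simp add: algebra_simps)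
  then show ?thesis using \<xi> \<eta> e1 e2 by (intro exI[of _ \<xi>] exI[of _ \<eta>]) (auto simp: algebra_simps)
qed

lemma partials_simps: "partials [] f = f" "partials (i # is) f = pd i (partials is f)"
  by (auto simp: partials_def)

lemma schwarz:
  fixes f :: "real^4 \<Rightarrow> real"
  assumes sm: "smooth_fun f"
  shows "pd i (pd j f) x = pd j (pd i f) x"
proof (rule ccontr)
  let ?e = "axis i 1 :: real^4" and ?d = "axis j 1 :: real^4"
  have D: "\<And>is z. partials is f differentiable (at z)" using sm by (auto simp: smooth_fun_def)
  have df: "\<And>z. f differentiable (at z)" using D[of "[]"] by (simp add: partials_simps)
  have dk: "\<And>z. pd i f differentiable (at z)" using D[of "[i]"] by (simp add: partials_simps)
  have dg: "\<And>z. pd j f differentiable (at z)" using D[of "[j]"] by (simp add: partials_simps)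
  have c1: "isCont (pd j (pd i f)) x" using D[of "[j,i]"]
    by (simp add: partials_simps differentiable_imp_continuous_within)
  have c2: "isCont (pd i (pd j f)) x" using D[of "[i,j]"]
    by (simp add: partials_simps differentiable_imp_continuous_within)
  assume ne: "pd i (pd j f) x \<noteq> pd j (pd i f) x"
  define \<epsilon> where "\<epsilon> = \<bar>pd i (pd j f) x - pd j (pd i f) x\<bar> / 2"
  have ep: "\<epsilon> > 0" using ne by (simp add: \<epsilon>_def)
  obtain d1 where d1: "d1 > 0" "\<And>y. dist y x < d1 \<Longrightarrow> dist (pd j (pd i f) y) (pd j (pd i f) x) < \<epsilon>"
    using c1 ep unfolding continuous_at_eps_delta by blast
  obtain d2 where d2: "d2 > 0" "\<And>y. dist y x < d2 \<Longrightarrow> dist (pd i (pd j f) y) (pd i (pd j f) x) < \<epsilon>"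
    using c2 ep unfolding continuous_at_eps_delta by blast
  define h where "h = min d1 d2 / 2"
  have h: "h > 0" using d1 d2 by (simp add: h_def)
  obtain \<xi> \<eta> where A: "0 < \<xi>" "\<xi> < h" "0 < \<eta>" "\<eta> < h"
    "f (x + h *\<^sub>R ?d + h *\<^sub>R ?e) - f (x + h *\<^sub>R ?e) - f (x + h *\<^sub>R ?d) + f x
      = h * h * pd j (pd i f) (x + \<xi> *\<^sub>R ?e + \<eta> *\<^sub>R ?d)"
    using schwarz_aux[OF df dk h, of x j] by blast
  obtain \<xi>' \<eta>' where B: "0 < \<xi>'" "\<xi>' < h" "0 < \<eta>'" "\<eta>' < h"
    "f (x + h *\<^sub>R ?e + h *\<^sub>R ?d) - f (x + h *\<^sub>R ?d) - f (x + h *\<^sub>R ?e) + f x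
      = h * h * pd i (pd j f) (x + \<xi>' *\<^sub>R ?d + \<eta>' *\<^sub>R ?e)"
    using schwarz_aux[OF df dg h, of x i] by blast
  have "x + h *\<^sub>R ?e + h *\<^sub>R ?d = x + h *\<^sub>R ?d + h *\<^sub>R ?e" by (simp add: algebra_simps)
  then have eq: "pd j (pd i f) (x + \<xi> *\<^sub>R ?e + \<eta> *\<^sub>R ?d) = pd i (pd j f) (x + \<xi>' *\<^sub>R ?d + \<eta>' *\<^sub>R ?e)"
    using A(5) B(5) h by (simp add: algebra_simps)
  have nb: "norm (a *\<^sub>R ?e + b *\<^sub>R ?d) < 2 * h" if "0 < a" "a < h" "0 < b" "b < h" for a b
  proof -
    have "norm (a *\<^sub>R ?e + b *\<^sub>R ?d) \<le> norm (a *\<^sub>R ?e) + norm (b *\<^sub>R ?d)" by (rule norm_triangle_ineq)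
    also have "\<dots> = a + b" using that by simp
    finally show ?thesis using that by simp
  qed
  have "dist (x + \<xi> *\<^sub>R ?e + \<eta> *\<^sub>R ?d) x < d1"
    using nb[OF A(1-4)] h_def by (simp add: dist_norm add.assoc)
  then have 1: "dist (pd j (pd i f) (x + \<xi> *\<^sub>R ?e + \<eta> *\<^sub>R ?d)) (pd j (pd i f) x) < \<epsilon>" using d1 by blast
  have "norm (\<eta>' *\<^sub>R ?e + \<xi>' *\<^sub>R ?d) < 2 * h" using nb[of \<eta>' \<xi>'] B by simp
  then have "dist (x + \<xi>' *\<^sub>R ?d + \<eta>' *\<^sub>R ?e) x < d2"
    using h_def by (simp add: dist_norm add.assoc add.commute)
  then have 2: "dist (pd i (pd j f) (x + \<xi>' *\<^sub>R ?d + \<eta>' *\<^sub>R ?e)) (pd i (pd j f) x) < \<epsilon>" using d2 by blast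
  from 1 2 eq show False unfolding \<epsilon>_def dist_real_def by (simp add: abs_if split: if_splits)
qed


lemma perm_sum1:
  fixes g :: "nat \<Rightarrow> real"
  assumes fin: "finite S" and a: "a \<in> S"
  shows "(\<Sum>p\<in>{p. p permutes S}. g (p a)) = fact (card S - 1) * (\<Sum>k\<in>S. g k)"
proof -
  have S: "S = insert a (S - {a})" using a by auto
  have "(\<Sum>p\<in>{p. p permutes S}. g (p a))
      = (\<Sum>b\<in>insert a (S - {a}). \<Sum>q\<in>{p. p permutes (S - {a})}. g ((Transposition.transpose a b \<circ> q) a))"
    by (subst S, rule sum_over_permutations_insert) (use fin in auto)
  also have "\<dots> = (\<Sum>b\<in>S. \<Sum>q\<in>{p. p permutes (S - {a})}. g b)"
  proof (rule sum.cong)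
    show "insert a (S - {a}) = S" using a by auto
  next
    fix b assume "b \<in> S"
    show "(\<Sum>q\<in>{p. p permutes (S - {a})}. g ((Transposition.transpose a b \<circ> q) a)) = (\<Sum>q\<in>{p. p permutes (S - {a})}. g b)"
    proof (rule sum.cong)
      fix q assume "q \<in> {p. p permutes (S - {a})}"
      then have "q a = a" by (auto intro: permutes_not_in)
      then show "g ((Transposition.transpose a b \<circ> q) a) = g b" by simp
    qed simp
  qed
  also have "\<dots> = (\<Sum>b\<in>S. fact (card S - 1) * g b)"
    using fin a by (simp add: card_permutations card_Diff_singleton)
  finally show ?thesis by (simp add: sum_distrib_left)
qed

lemma transpose_image_Diff:
  assumes "a \<in> S" "b \<in> S"
  shows "bij_betw (Transposition.transpose a b) (S - {a}) (S - {b})"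
proof -
  have B: "bij_betw (Transposition.transpose a b) S S" using assms
    by (simp add: bij_betw_def Transposition.transpose_image_eq) 
  then show ?thesis
  proof -
    have "bij_betw (Transposition.transpose a b) {a} {b}"
      by (simp add: bij_betw_def)
    then show ?thesis using bij_betw_DiffI[OF B] assms by auto
  qed
qed

lemma perm_sum2:
  fixes g :: "nat \<Rightarrow> nat \<Rightarrow> real"
  assumes fin: "finite S" and a: "a \<in> S" and c: "c \<in> S" and ac: "a \<noteq> c"
  shows "(\<Sum>p\<in>{p. p permutes S}. g (p a) (p c)) = fact (card S - 2) * (\<Sum>i\<in>S. \<Sum>j\<in>S - {i}. g i j)"
proof -
  have S: "S = insert a (S - {a})" using a by auto
  have "(\<Sum>p\<in>{p. p permutes S}. g (p a) (p c))
      = (\<Sum>b\<in>insert a (S - {a}). \<Sum>q\<in>{p. p permutes (S - {a})}. g ((Transposition.transpose a b \<circ> q) a) ((Transposition.transpose a b \<circ> q) c))"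
    by (subst S, rule sum_over_permutations_insert) (use fin in auto)
  also have "\<dots> = (\<Sum>b\<in>S. \<Sum>q\<in>{p. p permutes (S - {a})}. g b (Transposition.transpose a b (q c)))"
  proof (rule sum.cong)
    show "insert a (S - {a}) = S" using a by auto
  next
    fix b assume "b \<in> S"
    show "(\<Sum>q\<in>{p. p permutes (S - {a})}. g ((Transposition.transpose a b \<circ> q) a) ((Transposition.transpose a b \<circ> q) c)) = (\<Sum>q\<in>{p. p permutes (S - {a})}. g b (Transposition.transpose a b (q c)))"
    proof (rule sum.cong)
      fix q assume "q \<in> {p. p permutes (S - {a})}"
      then have "q a = a" by (auto intro: permutes_not_in)
      then show "g ((Transposition.transpose a b \<circ> q) a) ((Transposition.transpose a b \<circ> q) c) = g b (Transposition.transpose a b (q c))" by simp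
    qed simp
  qed
  also have "\<dots> = (\<Sum>b\<in>S. fact (card (S - {a}) - 1) * (\<Sum>k\<in>S - {a}. g b (Transposition.transpose a b k)))"
    using fin c ac by (intro sum.cong refl perm_sum1[of "S - {a}" c "\<lambda>k. g _ (Transposition.transpose a _ k)"]) auto
  also have "\<dots> = (\<Sum>b\<in>S. fact (card S - 2) * (\<Sum>j\<in>S - {b}. g b j))"
  proof (rule sum.cong[OF refl])
    fix b assume b: "b \<in> S"
    have "(\<Sum>k\<in>S - {a}. g b (Transposition.transpose a b k)) = (\<Sum>j\<in>S - {b}. g b j)"
      by (rule sum.reindex_bij_betw[OF transpose_image_Diff[OF a b]])
    moreover have "card (S - {a}) - 1 = card S - 2" using fin a by (simp add: card_Diff_singleton)
    ultimately show "fact (card (S - {a}) - 1) * (\<Sum>k\<in>S - {a}. g b (Transposition.transpose a b k)) = fact (card S - 2) * (\<Sum>j\<in>S - {b}. g b j)"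
      by simp
  qed
  finally show ?thesis by (simp add: sum_distrib_left)
qed


definition Xm :: "(4 list \<Rightarrow> real^4 \<Rightarrow> real) \<Rightarrow> 4 multiset \<Rightarrow> real^4 \<Rightarrow> real" where
  "Xm X M = X (SOME l. mset l = M)"

lemma Xm_eq:
  assumes "symmetric_tensor n X" "length l = n"
  shows "X l = Xm X (mset l)"
proof -
  let ?l = "SOME l'. mset l' = mset l"
  have "mset ?l = mset l" by (rule someI) simp
  then show ?thesis using assms unfolding symmetric_tensor_def Xm_def by metis
qed

lemma Xm_smooth:
  assumes "symmetric_tensor n X" "\<And>as. length as = n \<Longrightarrow> smooth_fun (X as)" "length l = n"
  shows "smooth_fun (Xm X (mset l))"
  using assms Xm_eq by metis

lemma M1: "x \<in># M \<Longrightarrow> add_mset s M - {#x#} = add_mset s (M - {#x#})"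
  by (metis add_mset_commute add_mset_remove_trivial insert_DiffM)

lemma cond:
  assumes aff: "affine_tensor n X" and L: "length L = Suc n"
  shows "(\<Sum>k<Suc n. pd b (pd (L!k) (Xm X (mset L - {#L!k#}))) x) = 0"
proof -
  have sym: "symmetric_tensor n X" using aff by (simp add: affine_tensor_def)
  obtain c as where Lc: "L = c # as" using L by (cases L) auto
  have las: "length as = n" using L Lc by simp
  have "symz (\<lambda>l. pd b (pd (hd l) (X (tl l))) x) L = 0"
    using aff las unfolding affine_tensor_def Lc by blast
  then have 0: "(\<Sum>p\<in>{p. p permutes {..<Suc n}}. pd b (pd (hd (permute_list p L)) (X (tl (permute_list p L)))) x) = 0"
    unfolding symz_def permute_list_def[symmetric] using L by simp
  have "(\<Sum>p\<in>{p. p permutes {..<Suc n}}. pd b (pd (hd (permute_list p L)) (X (tl (permute_list p L)))) x)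
     = (\<Sum>p\<in>{p. p permutes {..<Suc n}}. (\<lambda>k. pd b (pd (L!k) (Xm X (mset L - {#L!k#}))) x) (p 0))"
  proof (rule sum.cong[OF refl])
    fix p assume p: "p \<in> {p. p permutes {..<Suc n}}"
    then have pL: "p permutes {..<length L}" using L by simp
    let ?pl = "permute_list p L"
    have len: "length ?pl = Suc n" using L by simp
    have hd: "hd ?pl = L ! p 0" using permute_list_nth[OF pL] L len
      by (metis hd_conv_nth list.size(3) nat.distinct(1) zero_less_Suc)
    have "mset L = mset ?pl" using mset_permute_list[OF pL] by simp
    also have "\<dots> = add_mset (hd ?pl) (mset (tl ?pl))" using len
      by (metis list.collapse list.size(3) mset.simps(2) nat.distinct(1))
    finally have "mset (tl ?pl) = mset L - {#L ! p 0#}" using hd by simp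
    moreover have "length (tl ?pl) = n" using len by simp
    ultimately show "pd b (pd (hd ?pl) (X (tl ?pl))) x = (\<lambda>k. pd b (pd (L!k) (Xm X (mset L - {#L!k#}))) x) (p 0)"
      using Xm_eq[OF sym] hd by metis
  qed
  also have "\<dots> = fact n * (\<Sum>k<Suc n. pd b (pd (L!k) (Xm X (mset L - {#L!k#}))) x)"
    using perm_sum1[of "{..<Suc n}" 0] by simp
  finally show ?thesis using 0 by simp
qed

lemma target:
  assumes sym: "symmetric_tensor n X" and las: "length as = n" and n: "n \<ge> 2"
  shows "symz (\<lambda>l. pd (l ! 0) (pd (l ! 1) (X (drop 2 l @ [r, s]))) x) as
    = fact (n - 2) / fact n * (\<Sum>i<n. \<Sum>j\<in>{..<n} - {i}.
         pd (as!i) (pd (as!j) (Xm X (mset ((as[i:=r])[j:=s])))) x)"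
proof -
  have "(\<Sum>p\<in>{p. p permutes {..<n}}. pd (permute_list p as ! 0) (pd (permute_list p as ! 1) (X (drop 2 (permute_list p as) @ [r, s]))) x)
     = (\<Sum>p\<in>{p. p permutes {..<n}}. (\<lambda>i j. pd (as!i) (pd (as!j) (Xm X (mset ((as[i:=r])[j:=s])))) x) (p 0) (p 1))"
  proof (rule sum.cong[OF refl])
    fix p assume p: "p \<in> {p. p permutes {..<n}}"
    then have pL: "p permutes {..<length as}" using las by simp
    let ?pl = "permute_list p as"
    let ?i = "p 0" and ?j = "p 1"
    have len: "length ?pl = n" using las by simp
    have n0: "?pl ! 0 = as ! ?i" using permute_list_nth[OF pL] las n by simp
    have n1: "?pl ! 1 = as ! ?j" using permute_list_nth[OF pL] las n by simp
    have "inj p" using pL by (rule permutes_inj)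
    then have ij: "?i \<noteq> ?j" using inj_eq[of p 0 1] by simp
    have ilt: "?i < n" "?j < n" using permutes_in_image[OF pL, of 0] permutes_in_image[OF pL, of 1] las n by auto
    have d1: "?pl!0 # drop (Suc 0) ?pl = drop 0 ?pl" using len n by (intro Cons_nth_drop_Suc) auto
    have d2: "?pl!1 # drop (Suc 1) ?pl = drop 1 ?pl" using len n by (intro Cons_nth_drop_Suc) auto
    have dec: "?pl = ?pl ! 0 # ?pl ! 1 # drop 2 ?pl" using d1 d2 by (simp add: numeral_2_eq_2)
    have "mset as = mset ?pl" using mset_permute_list[OF pL] by simp
    also have "\<dots> = mset (?pl ! 0 # ?pl ! 1 # drop 2 ?pl)" using arg_cong[OF dec, of mset] .
    finally have A: "mset as = add_mset (as ! ?i) (add_mset (as ! ?j) (mset (drop 2 ?pl)))"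
      using n0 n1 by simp
    have jin: "as ! ?j \<in># mset (as[?i := r])"
    proof -
      have "(as[?i := r]) ! ?j = as ! ?j" using ij by simp
      moreover have "?j < length (as[?i := r])" using ilt las by simp
      ultimately show ?thesis by (metis nth_mem set_mset_mset)
    qed
    have iin: "as ! ?i \<in># mset as" using ilt las by simp
    have R: "mset ((as[?i:=r])[?j:=s]) = add_mset s (mset (as[?i := r]) - {#as ! ?j#})"
      using mset_update[of ?j "as[?i:=r]" s] ilt las ij by simp
    have "add_mset (as ! ?i) (add_mset (as ! ?j) (mset ((as[?i:=r])[?j:=s])))
        = add_mset (as ! ?i) (add_mset s (mset (as[?i := r])))"
      unfolding R using jin by (simp add: add_mset_commute)
    also have "\<dots> = add_mset s (add_mset r (mset as))"
      using mset_update[of ?i as r] ilt las iin by (simp add: add_mset_commute)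
    also have "\<dots> = add_mset (as ! ?i) (add_mset (as ! ?j) (mset (drop 2 ?pl @ [r, s])))"
      unfolding A by (simp add: add_mset_commute)
    finally have "mset (drop 2 ?pl @ [r, s]) = mset ((as[?i:=r])[?j:=s])" by simp
    moreover have "length (drop 2 ?pl @ [r, s]) = n" using len n by simp
    ultimately have "X (drop 2 ?pl @ [r, s]) = Xm X (mset ((as[?i:=r])[?j:=s]))"
      using Xm_eq[OF sym] by metis
    then show "pd (?pl ! 0) (pd (?pl ! 1) (X (drop 2 ?pl @ [r, s]))) x
       = (\<lambda>i j. pd (as!i) (pd (as!j) (Xm X (mset ((as[i:=r])[j:=s])))) x) ?i ?j"
      using n0 n1 by simp
  qed
  also have "\<dots> = fact (n - 2) * (\<Sum>i<n. \<Sum>j\<in>{..<n} - {i}.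
         pd (as!i) (pd (as!j) (Xm X (mset ((as[i:=r])[j:=s])))) x)"
    using perm_sum2[of "{..<n}" 0 1] n by simp
  finally show ?thesis unfolding symz_def permute_list_def[symmetric] using las by simp
qed


theorem mainTheorem3:
  fixes n :: nat and X :: "4 list \<Rightarrow> real^4 \<Rightarrow> real"
  assumes "n \<ge> 2"
    and "\<And>as. length as = n \<Longrightarrow> smooth_fun (X as)"
    and "affine_tensor n X"
  shows "\<And>r s as x. length as = n \<Longrightarrow>
    pd r (pd s (X as)) x =
      (real n * (real n - 1) / 2) *
        symz (\<lambda>l. pd (l ! 0) (pd (l ! 1) (X (drop 2 l @ [r, s]))) x) as"
proof -
  fix r s :: 4 and as :: "4 list" and x :: "real^4" assume las: "length as = n"
  note n = assms(1) and smX = assms(2) and aff = assms(3)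
  have sym: "symmetric_tensor n X" using aff by (simp add: affine_tensor_def)
  have sch: "\<And>l i j. length l = n \<Longrightarrow> pd i (pd j (Xm X (mset l))) x = pd j (pd i (Xm X (mset l))) x"
    using Xm_smooth[OF sym smX] schwarz by blast
  define A where "A = mset as"
  define D where "D = pd r (pd s (Xm X A)) x"
  define P where "P i = pd r (pd (as!i) (Xm X (mset (as[i:=s])))) x" for i
  define Q where "Q i = pd s (pd (as!i) (Xm X (mset (as[i:=r])))) x" for i
  define G where "G i j = pd (as!i) (pd (as!j) (Xm X (mset ((as[i:=r])[j:=s])))) x" for i j
  have Xas: "X as = Xm X A" unfolding A_def by (rule Xm_eq[OF sym las])
  have memA: "\<And>i. i < n \<Longrightarrow> as ! i \<in># A" using las by (simp add: A_def)
  have e1: "D + (\<Sum>i<n. P i) = 0"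
  proof -
    have "(\<Sum>k<Suc n. pd r (pd ((s#as)!k) (Xm X (mset (s#as) - {#(s#as)!k#}))) x) = 0"
      by (rule cond[OF aff]) (simp add: las)
    moreover have "mset (s#as) - {#(s#as)!Suc i#} = mset (as[i:=s])" if "i < n" for i
      using that las memA M1 mset_update[of i as s] by (simp add: A_def)
    ultimately show ?thesis unfolding sum.lessThan_Suc_shift D_def P_def A_def by simp
  qed
  have e2: "D + (\<Sum>i<n. Q i) = 0"
  proof -
    have "(\<Sum>k<Suc n. pd s (pd ((r#as)!k) (Xm X (mset (r#as) - {#(r#as)!k#}))) x) = 0"
      by (rule cond[OF aff]) (simp add: las)
    moreover have "mset (r#as) - {#(r#as)!Suc i#} = mset (as[i:=r])" if "i < n" for i
      using that las memA M1 mset_update[of i as r] by (simp add: A_def)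
    moreover have "pd s (pd r (Xm X (mset as))) x = D" unfolding D_def A_def using sch las by simp
    ultimately show ?thesis unfolding sum.lessThan_Suc_shift Q_def A_def by simp
  qed
  have e3: "Q i + P i + (\<Sum>j\<in>{..<n} - {i}. G i j) = 0" if i: "i < n" for i
  proof -
    define L where "L = s # as[i:=r]"
    have lL: "length L = Suc n" using las by (simp add: L_def)
    have c: "(\<Sum>k<Suc n. pd (as!i) (pd (L!k) (Xm X (mset L - {#L!k#}))) x) = 0"
      using cond[OF aff lL] .
    have mL: "mset L = add_mset s (mset (as[i:=r]))" by (simp add: L_def)
    have t0: "pd (as!i) (pd (L!0) (Xm X (mset L - {#L!0#}))) x = Q i"
      unfolding Q_def using sch[of "as[i:=r]"] las by (simp add: L_def)
    have t1: "pd (as!i) (pd (L!Suc i) (Xm X (mset L - {#L!Suc i#}))) x = P i"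
    proof -
      have "L ! Suc i = r" using i las by (simp add: L_def)
      moreover have "mset L - {#r#} = mset (as[i:=s])"
        using mL mset_update[of i as r] mset_update[of i as s] i las by simp
      ultimately show ?thesis unfolding P_def using sch[of "as[i:=s]"] las by simp
    qed
    have tj: "pd (as!i) (pd (L!Suc j) (Xm X (mset L - {#L!Suc j#}))) x = G i j"
      if j: "j \<in> {..<n} - {i}" for j
    proof -
      have Lj: "L ! Suc j = as ! j" using j by (simp add: L_def)
      have jin: "as ! j \<in># mset (as[i:=r])"
      proof -
        have "(as[i := r]) ! j = as ! j" using j by simp
        moreover have "j < length (as[i := r])" using j las by simp
        ultimately show ?thesis by (metis nth_mem set_mset_mset)
      qed
      have "mset L - {#as ! j#} = mset ((as[i:=r])[j:=s])"
        using mL M1[OF jin] mset_update[of j "as[i:=r]" s] j las by simp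
      then show ?thesis unfolding G_def Lj by simp
    qed
    have "(\<Sum>k<Suc n. pd (as!i) (pd (L!k) (Xm X (mset L - {#L!k#}))) x)
       = Q i + (pd (as!i) (pd (L!Suc i) (Xm X (mset L - {#L!Suc i#}))) x
            + (\<Sum>j\<in>{..<n} - {i}. pd (as!i) (pd (L!Suc j) (Xm X (mset L - {#L!Suc j#}))) x))"
      unfolding sum.lessThan_Suc_shift t0 using i by (simp add: sum.remove)
    also have "\<dots> = Q i + (P i + (\<Sum>j\<in>{..<n} - {i}. G i j))"
      using t1 tj by simp
    finally show ?thesis using c by simp
  qed
  have "(\<Sum>i<n. Q i + P i + (\<Sum>j\<in>{..<n} - {i}. G i j)) = 0" using e3 by simp
  then have S: "(\<Sum>i<n. \<Sum>j\<in>{..<n} - {i}. G i j) = 2 * D"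
    using e1 e2 by (simp add: sum.distrib)
  obtain m where m: "n = Suc (Suc m)" using n by (metis add_2_eq_Suc le_Suc_ex)
  have "symz (\<lambda>l. pd (l ! 0) (pd (l ! 1) (X (drop 2 l @ [r, s]))) x) as
      = fact (n - 2) / fact n * (2 * D)"
    using target[OF sym las n, of r s x] S unfolding G_def by simp
  also have "fact (n - 2) / fact n = 1 / (real n * (real n - 1))"
  proof -
    have f: "(fact n::real) = real n * (real n - 1) * fact (n-2)" unfolding m by (simp add: algebra_simps)
    have "(fact (n-2)::real) \<noteq> 0" by simp
    then show ?thesis unfolding f by simp
  qed
  finally show "pd r (pd s (X as)) x =
      (real n * (real n - 1) / 2) *
        symz (\<lambda>l. pd (l ! 0) (pd (l ! 1) (X (drop 2 l @ [r, s]))) x) as"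
    using n unfolding Xas D_def[symmetric] by (simp add: field_simps)
qed

end
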